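(* Let $\mu_1,\mu_2\in\mathbb{R}$ with $\mu_1+\mu_2>0$ or $\mu_1=\mu_2=0$, and let $f_1\in\mathcal{F}_{\mu_1,L_1}$, $f_2\in\mathcal{F}_{\mu_2,L_2}$ where exactly one of $L_1,L_2$ equals $\infty$ and the other is finite, with $\mu_1<L_1$, $\mu_2<L_2$, and $F=f_1-f_2$ bounded below, $F^*:=\inf F$. Run $N\ge1$ DCA iterations from $x^0$ producing $x^1,\dots,x^N$, with selected $g_2^k\in\partial f_2(x^k)$ for $0\le k\le N-1$, $g_1^k:=g_2^{k-1}\in\partial f_1(x^k)$ for $1\le k\le N$, and arbitrary $g_1^0\in\partial f_1(x^0)$, $g_2^N\in\partial f_2(x^N)$. Consider the following regimes (with $\sigma,\sigma^+\ge0$ and $p=\sigma+\sigma^+$): ($p_{1,7}$) $L_1=\infty>L_2>\mu_1\ge0$ and either $\mu_2\ge0$ or [$\mu_2<0$ and $\mu_1^{-1}+\mu_2^{-1}+L_2^{-1}\le0$]: $\sigma=0$, $\sigma^+=\frac{L_2+\mu_1}{L_2^2}$. ($p_{2,8}$) $L_2=\infty>L_1>\mu_2\ge0$ and either $\mu_1\ge0$ or [$\mu_1<0$ and $\mu_1^{-1}+\mu_2^{-1}+L_1^{-1}\le0$]: $\sigma=\frac{L_1+\mu_2}{L_1^2}$, $\sigma^+=0$. ($p_3$) $L_2=\infty$, $\mu_1>-\mu_2>0$: $\sigma=\frac{L_1^{-1}(\mu_1^{-1}+\mu_2^{-1})}{\mu_1^{-1}+\mu_2^{-1}-L_1^{-1}}$,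 $\sigma^+=0$. ($p_4$) $L_1=\infty$, $\mu_2>-\mu_1>0$: $\sigma=0$, $\sigma^+=\frac{L_2^{-1}(\mu_1^{-1}+\mu_2^{-1})}{\mu_1^{-1}+\mu_2^{-1}-L_2^{-1}}$. ($p_5$) $L_1=\infty$, $\mu_1>-\mu_2>0$, $0<\mu_1^{-1}+\mu_2^{-1}+L_2^{-1}$: $\sigma=0$, $\sigma^+=\frac{\mu_1+\mu_2}{\mu_2^2}$. ($p_6$) $L_2=\infty$, $\mu_2>-\mu_1>0$, $0<\mu_1^{-1}+\mu_2^{-1}+L_1^{-1}$: $\sigma=\frac{\mu_1+\mu_2}{\mu_1^2}$, $\sigma^+=0$. If the parameters fall in one of these regimes and the corresponding $p>0$, then the one-step bound $F(x)-F(x^+)\ge\frac{\sigma}{2}\|g_1-g_2\|^2+\frac{\sigma^+}{2}\|g_1^+-g_2^+\|^2$ holds for every DCA step (with $g_1^+=g_2$ the selected subgradient, $g_1\in\partial f_1(x)$, $g_2^+\in\partial f_2(x^+)$ arbitrary), and $$\frac12\min_{0\le k\le N}\|g_1^k-g_2^k\|^2\le\frac{F(x^0)-F(x^N)}{pN};$$ if moreover $L_1>\mu_2$, then $\frac12\min_{0\le k\le N}\|g_1^k-g_2^k\|^2\le\frac{F(x^0)-F^*}{pN+\frac{1}{L_1-\mu_2}}$, where $\frac{1}{L_1-\mu_2}=0$ if $L_1=\infty$.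
   Context: For $L\in(0,\infty]$ and $\mu<L$, $\mathcal{F}_{\mu,L}=\mathcal{F}_{\mu,L}(\mathbb{R}^d)$ denotes the class of proper lower semicontinuous functions $f:\mathbb{R}^d\to\mathbb{R}$ such that $f-\frac{\mu}{2}\|\cdot\|^2$ is convex and, if $L<\infty$, also $\frac{L}{2}\|\cdot\|^2-f$ is convex (for $L=\infty$ only the first condition is imposed). Subdifferential: for convex $f$, $\partial f(x)=\{g:\ f(y)\ge f(x)+\langle g,y-x\rangle\ \forall y\}$; for $f\in\mathcal{F}_{\mu,L}$ with $\mu<0$, $\partial f(x):=\{g-\mu x:\ g\in\partial\tilde f(x)\}$ where $\tilde f=f-\frac{\mu}{2}\|\cdot\|^2$ is convex. One DCA iteration from $x$: select $g_2\in\partial f_2(x)$, then select $x^+\in\arg\min_{w\in\mathbb{R}^d}\{f_1(w)-\langle g_2,w\rangle\}$ (assumed to exist); the optimality condition gives $g_2\in\partial f_1(x^+)$. *)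

theory Defs
  imports "HOL-Analysis.Analysis" "HOL-Library.Extended_Real"
begin

definition lsc_fun :: "('a::topological_space \<Rightarrow> real) \<Rightarrow> bool" where
  "lsc_fun f \<longleftrightarrow> (\<forall>x. \<forall>e>0. \<forall>\<^sub>F y in at x. f x - e < f y)"

text \<open>The class F_{mu,L}; L = PInfty encodes L = infinity.\<close>
definition fclass :: "real \<Rightarrow> ereal \<Rightarrow> ('a::euclidean_space \<Rightarrow> real) \<Rightarrow> bool" where
  "fclass \<mu> L f \<longleftrightarrow> lsc_fun f
     \<and> convex_on UNIV (\<lambda>x. f x - \<mu> / 2 * (norm x)\<^sup>2)
     \<and> (L \<noteq> PInfty \<longrightarrow> convex_on UNIV (\<lambda>x. real_of_ereal L / 2 * (norm x)\<^sup>2 - f x))"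

definition csubdiff :: "('a::real_inner \<Rightarrow> real) \<Rightarrow> 'a \<Rightarrow> 'a set" where
  "csubdiff f x = {g. \<forall>y. f y \<ge> f x + inner g (y - x)}"

text \<open>Subdifferential of f in F_{mu,L}: the convex one if mu >= 0 (f convex), otherwise via
  the convex function f - mu/2 |.|^2.\<close>
definition subdiff :: "real \<Rightarrow> ('a::real_inner \<Rightarrow> real) \<Rightarrow> 'a \<Rightarrow> 'a set" where
  "subdiff \<mu> f x = (if \<mu> \<ge> 0 then csubdiff f x
      else {g + \<mu> *\<^sub>R x | g. g \<in> csubdiff (\<lambda>y. f y - \<mu> / 2 * (norm y)\<^sup>2) x})"

definition dca_argmin :: "('a::real_inner \<Rightarrow> real) \<Rightarrow> 'a \<Rightarrow> 'a \<Rightarrow> bool" where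
  "dca_argmin f1 g2 x' \<longleftrightarrow> (\<forall>w. f1 x' - inner g2 x' \<le> f1 w - inner g2 w)"

definition dca_regime :: "real \<Rightarrow> real \<Rightarrow> ereal \<Rightarrow> ereal \<Rightarrow> real \<Rightarrow> real \<Rightarrow> bool" where
  "dca_regime \<mu>1 \<mu>2 L1 L2 \<sigma> \<sigma>p \<longleftrightarrow>
    (let l1 = real_of_ereal L1; l2 = real_of_ereal L2 in
     \<comment> \<open>p_{1,7}\<close>
     (L1 = PInfty \<and> L2 \<noteq> PInfty \<and> l2 > \<mu>1 \<and> \<mu>1 \<ge> 0 \<and>
       (\<mu>2 \<ge> 0 \<or> (\<mu>2 < 0 \<and> 1/\<mu>1 + 1/\<mu>2 + 1/l2 \<le> 0)) \<and>
       \<sigma> = 0 \<and> \<sigma>p = (l2 + \<mu>1) / l2\<^sup>2)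
   \<or> \<comment> \<open>p_{2,8}\<close>
     (L2 = PInfty \<and> L1 \<noteq> PInfty \<and> l1 > \<mu>2 \<and> \<mu>2 \<ge> 0 \<and>
       (\<mu>1 \<ge> 0 \<or> (\<mu>1 < 0 \<and> 1/\<mu>1 + 1/\<mu>2 + 1/l1 \<le> 0)) \<and>
       \<sigma> = (l1 + \<mu>2) / l1\<^sup>2 \<and> \<sigma>p = 0)
   \<or> \<comment> \<open>p_3\<close>
     (L2 = PInfty \<and> \<mu>1 > - \<mu>2 \<and> - \<mu>2 > 0 \<and>
       \<sigma> = ((1/l1) * (1/\<mu>1 + 1/\<mu>2)) / (1/\<mu>1 + 1/\<mu>2 - 1/l1) \<and> \<sigma>p = 0)
   \<or> \<comment> \<open>p_4\<close>
     (L1 = PInfty \<and> \<mu>2 > - \<mu>1 \<and> - \<mu>1 > 0 \<and>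
       \<sigma> = 0 \<and> \<sigma>p = ((1/l2) * (1/\<mu>1 + 1/\<mu>2)) / (1/\<mu>1 + 1/\<mu>2 - 1/l2))
   \<or> \<comment> \<open>p_5\<close>
     (L1 = PInfty \<and> \<mu>1 > - \<mu>2 \<and> - \<mu>2 > 0 \<and> 0 < 1/\<mu>1 + 1/\<mu>2 + 1/l2 \<and>
       \<sigma> = 0 \<and> \<sigma>p = (\<mu>1 + \<mu>2) / \<mu>2\<^sup>2)
   \<or> \<comment> \<open>p_6\<close>
     (L2 = PInfty \<and> \<mu>2 > - \<mu>1 \<and> - \<mu>1 > 0 \<and> 0 < 1/\<mu>1 + 1/\<mu>2 + 1/l1 \<and>
       \<sigma> = (\<mu>1 + \<mu>2) / \<mu>1\<^sup>2 \<and> \<sigma>p = 0))"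

end

theory Submission imports Defs begin

lemma eps_lemma:
  fixes a b M w :: real
  assumes c: "w \<ge> 0" and h: "\<And>s. 0 < s \<Longrightarrow> s < 1 \<Longrightarrow> b - M * s * w \<le> a"
  shows "b \<le> a"
proof (rule field_le_epsilon)
  fix e :: real assume e: "0 < e"
  define s where "s = min (1/2) (e/(\<bar>M\<bar>*w+1))"
  have d: "\<bar>M\<bar>*w+1 > 0" using c by (simp add: add_nonneg_pos)
  have s0: "0 < s" "s < 1" using e d by (auto simp: s_def)
  have s1: "s \<le> e/(\<bar>M\<bar>*w+1)" by (simp add: s_def)
  have "M * s * w \<le> \<bar>M\<bar> * w * s" using c s0 by (metis abs_ge_self mult.commute mult_right_mono mult.assoc less_imp_le)
  also have "\<dots> \<le> (\<bar>M\<bar>*w+1) * s" using s0 by (simp add: distrib_right)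
  also have "\<dots> \<le> (\<bar>M\<bar>*w+1) * (e/(\<bar>M\<bar>*w+1))" using s1 d by (intro mult_left_mono) auto
  also have "\<dots> = e" using d by simp
  finally show "b \<le> a + e" using h[OF s0] by linarith
qed

lemma convex_lower_trick:
  fixes \<phi> :: "'a::real_inner \<Rightarrow> real"
  assumes cv: "convex_on UNIV \<phi>"
    and lb: "\<And>y. \<phi> y \<ge> \<phi> x + inner v (y - x) - K * (norm (y - x))\<^sup>2"
  shows "\<phi> y \<ge> \<phi> x + inner v (y - x)"
proof (rule eps_lemma[where M=K and w="(norm (y - x))\<^sup>2"])
  fix s :: real assume s: "0 < s" "s < 1"
  define z where "z = (1 - s) *\<^sub>R x + s *\<^sub>R y"
  have zx: "z - x = s *\<^sub>R (y - x)" by (simp add: z_def algebra_simps)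
  have c1: "\<phi> z \<le> (1 - s) * \<phi> x + s * \<phi> y" unfolding z_def using s by (intro convex_onD[OF cv]) auto
  have c2: "\<phi> z \<ge> \<phi> x + s * inner v (y - x) - K * s^2 * (norm (y - x))\<^sup>2"
    using lb[of z] unfolding zx by (simp add: power_mult_distrib)
  have "s * (\<phi> x + inner v (y - x) - K * s * (norm (y - x))\<^sup>2) \<le> s * \<phi> y"
    using c1 c2 by (simp add: algebra_simps power2_eq_square)
  then show "\<phi> x + inner v (y - x) - K * s * (norm (y - x))\<^sup>2 \<le> \<phi> y" using s by simp
qed simp

lemma convex_upper_trick:
  fixes \<phi> :: "'a::real_inner \<Rightarrow> real"
  assumes cv: "convex_on UNIV \<phi>"
    and ub: "\<And>y. \<phi> y \<le> \<phi> x + inner v (y - x) + K * (norm (y - x))\<^sup>2"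
  shows "\<phi> y \<ge> \<phi> x + inner v (y - x)"
proof (rule eps_lemma[where M=K and w="(norm (y - x))\<^sup>2"])
  fix s :: real assume s: "0 < s" "s < 1"
  define z where "z = x - s *\<^sub>R (y - x)"
  define t where "t = s / (1 + s)"
  have t: "0 \<le> t" "t \<le> 1" using s by (auto simp: t_def)
  have xz: "x = (1 - t) *\<^sub>R z + t *\<^sub>R y"
  proof -
    have "(1 + s) *\<^sub>R ((1 - t) *\<^sub>R z + t *\<^sub>R y) = (1 + s) *\<^sub>R x"
      using s by (simp add: t_def z_def algebra_simps divide_simps scaleR_add_right)
    then show ?thesis using s by (metis add_pos_pos less_numeral_extra(1) scaleR_left_imp_eq less_irrefl)
  qed
  have c1: "\<phi> x \<le> (1 - t) * \<phi> z + t * \<phi> y" by (subst xz, intro convex_onD[OF cv]) (use t in auto)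
  have c2: "\<phi> z \<le> \<phi> x - s * inner v (y - x) + K * s^2 * (norm (y - x))\<^sup>2"
    using ub[of z] by (simp add: z_def power_mult_distrib)
  have "(1+s) * \<phi> x \<le> \<phi> z + s * \<phi> y"
  proof -
    have "(1+s) * \<phi> x \<le> (1+s) * ((1 - t) * \<phi> z + t * \<phi> y)" using c1 s by simp
    also have "\<dots> = ((1+s)*(1-t)) * \<phi> z + ((1+s)*t) * \<phi> y" by (simp add: algebra_simps)
    also have "(1+s)*(1-t) = 1" using s by (simp add: t_def field_simps)
    also have "(1+s)*t = s" using s by (simp add: t_def field_simps)
    finally show ?thesis by simp
  qed
  with c2 have "s * (\<phi> x + inner v (y - x) - K * s * (norm (y - x))\<^sup>2) \<le> s * \<phi> y"
    by (simp add: algebra_simps power2_eq_square)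
  then show "\<phi> x + inner v (y - x) - K * s * (norm (y - x))\<^sup>2 \<le> \<phi> y" using s by simp
qed simp

lemma sq_id: fixes x y :: "'a::real_inner"
  shows "(norm y)\<^sup>2 = (norm x)\<^sup>2 + 2 * inner x (y - x) + (norm (y - x))\<^sup>2"
  by (simp add: power2_norm_eq_inner inner_diff_left inner_diff_right inner_commute)

lemma sub_h:
  fixes f :: "'a::euclidean_space \<Rightarrow> real"
  assumes fc: "fclass \<mu> L f" and g: "g \<in> subdiff \<mu> f x"
  shows "f y - \<mu>/2*(norm y)\<^sup>2 \<ge> f x - \<mu>/2*(norm x)\<^sup>2 + inner (g - \<mu> *\<^sub>R x) (y - x)"
proof (cases "\<mu> \<ge> 0")
  case True
  then have gc: "\<And>y. f y \<ge> f x + inner g (y - x)" using g by (simp add: subdiff_def csubdiff_def)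
  have cv: "convex_on UNIV (\<lambda>x. f x - \<mu> / 2 * (norm x)\<^sup>2)" using fc by (simp add: fclass_def)
  show ?thesis
  proof (rule convex_lower_trick[OF cv, where K="\<mu>/2"])
    fix y
    have "f y - \<mu> / 2 * (norm y)\<^sup>2 = f y - \<mu> / 2 * ((norm x)\<^sup>2 + 2 * inner x (y - x) + (norm (y - x))\<^sup>2)"
      by (subst sq_id[of y x]) simp
    then show "f y - \<mu> / 2 * (norm y)\<^sup>2 \<ge> f x - \<mu> / 2 * (norm x)\<^sup>2 + inner (g - \<mu> *\<^sub>R x) (y - x) - \<mu> / 2 * (norm (y - x))\<^sup>2"
      using gc[of y] by (simp add: inner_diff_left algebra_simps)
  qed
next
  case False
  then obtain g0 where g0: "g = g0 + \<mu> *\<^sub>R x" "g0 \<in> csubdiff (\<lambda>y. f y - \<mu> / 2 * (norm y)\<^sup>2) x"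
    using g by (auto simp: subdiff_def)
  then show ?thesis by (simp add: csubdiff_def)
qed

lemma lower_bd:
  fixes f :: "'a::euclidean_space \<Rightarrow> real"
  assumes fc: "fclass \<mu> L f" and g: "g \<in> subdiff \<mu> f x"
  shows "f y \<ge> f x + inner g (y - x) + \<mu>/2*(norm (y - x))\<^sup>2"
proof -
  have "f y - \<mu>/2*(norm y)\<^sup>2 \<ge> f x - \<mu>/2*(norm x)\<^sup>2 + inner (g - \<mu> *\<^sub>R x) (y - x)"
    by (rule sub_h[OF fc g])
  moreover have "f y - \<mu> / 2 * (norm y)\<^sup>2 = f y - \<mu> / 2 * ((norm x)\<^sup>2 + 2 * inner x (y - x) + (norm (y - x))\<^sup>2)"
    by (subst sq_id[of y x]) simp
  ultimately show ?thesis by (simp add: inner_diff_left algebra_simps)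
qed

lemma upper_bd:
  fixes f :: "'a::euclidean_space \<Rightarrow> real"
  assumes fc: "fclass \<mu> L f" and g: "g \<in> subdiff \<mu> f x" and L: "L \<noteq> PInfty"
  shows "f y \<le> f x + inner g (y - x) + real_of_ereal L/2*(norm (y - x))\<^sup>2"
proof -
  define l where "l = real_of_ereal L"
  have cv: "convex_on UNIV (\<lambda>x. l / 2 * (norm x)\<^sup>2 - f x)" using fc L by (simp add: fclass_def l_def)
  have "l / 2 * (norm y)\<^sup>2 - f y \<ge> l / 2 * (norm x)\<^sup>2 - f x + inner (l *\<^sub>R x - g) (y - x)"
  proof (rule convex_upper_trick[OF cv, where K="(l - \<mu>)/2"])
    fix y
    have "l / 2 * (norm y)\<^sup>2 = l / 2 * ((norm x)\<^sup>2 + 2 * inner x (y - x) + (norm (y - x))\<^sup>2)"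
      by (subst sq_id[of y x]) simp
    then have e1: "l / 2 * (norm y)\<^sup>2 = l/2*(norm x)\<^sup>2 + l*(inner x (y-x)) + l/2*(norm (y-x))\<^sup>2"
      by (simp add: ring_distribs)
    have e2: "inner (l *\<^sub>R x - g) (y - x) = l * (inner x (y - x)) - inner g (y - x)" by (simp add: inner_diff_left)
    have e3: "(l - \<mu>)/2 * (norm (y - x))\<^sup>2 = l/2*(norm (y - x))\<^sup>2 - \<mu>/2*(norm (y - x))\<^sup>2" by (simp add: left_diff_distrib diff_divide_distrib)
    show "l / 2 * (norm y)\<^sup>2 - f y \<le> l / 2 * (norm x)\<^sup>2 - f x + inner (l *\<^sub>R x - g) (y - x) + (l - \<mu>) / 2 * (norm (y - x))\<^sup>2"
      unfolding e2 e3 using e1 lower_bd[OF fc g, of y] by linarith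
  qed
  moreover have "l / 2 * (norm y)\<^sup>2 = l / 2 * ((norm x)\<^sup>2 + 2 * inner x (y - x) + (norm (y - x))\<^sup>2)"
    by (subst sq_id[of y x]) simp
  then have e1: "l / 2 * (norm y)\<^sup>2 = l/2*(norm x)\<^sup>2 + l*(inner x (y-x)) + l/2*(norm (y-x))\<^sup>2"
    by (simp add: ring_distribs)
  have e2: "inner (l *\<^sub>R x - g) (y - x) = l * (inner x (y - x)) - inner g (y - x)" by (simp add: inner_diff_left)
  ultimately show ?thesis using e1 e2 unfolding l_def[symmetric] by linarith
qed

definition rr :: "real \<Rightarrow> ereal \<Rightarrow> real" where
  "rr \<mu> L = (if L = PInfty then 0 else 1/(2*(real_of_ereal L - \<mu>)))"

lemma interp:
  fixes f :: "'a::euclidean_space \<Rightarrow> real"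
  assumes fc: "fclass \<mu> L f" and muL: "ereal \<mu> < L"
    and g: "g \<in> subdiff \<mu> f x" and g': "g' \<in> subdiff \<mu> f y"
  shows "f x \<ge> f y + inner g' (x - y) + \<mu>/2*(norm (x - y))\<^sup>2 + rr \<mu> L * (norm (g - g' - \<mu> *\<^sub>R (x - y)))\<^sup>2"
proof (cases "L = PInfty")
  case True
  then show ?thesis using lower_bd[OF fc g', of x] by (simp add: rr_def)
next
  case False
  define l where "l = real_of_ereal L"
  have Ll: "L = ereal l" using False muL unfolding l_def by (cases L) auto
  have lm: "l - \<mu> > 0" using muL Ll by simp
  define e where "e = x - y"
  define v where "v = g' - g + \<mu> *\<^sub>R e"
  define w where "w = (1/(l - \<mu>)) *\<^sub>R v"
  define z where "z = x + w"
  have up: "f z \<le> f x + inner g w + l/2*(norm w)\<^sup>2"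
    using upper_bd[OF fc g False, of z] by (simp add: z_def l_def)
  have lo: "f z \<ge> f y + inner g' (e + w) + \<mu>/2*(norm (e + w))\<^sup>2"
    using lower_bd[OF fc g', of z] by (simp add: z_def e_def algebra_simps)
  have n1: "(norm (e + w))\<^sup>2 = (norm e)\<^sup>2 + 2 * inner e w + (norm w)\<^sup>2"
    by (simp add: power2_norm_eq_inner inner_add_left inner_add_right inner_commute)
  have vw: "inner v w = (norm v)\<^sup>2 / (l - \<mu>)" by (simp add: w_def power2_norm_eq_inner)
  have ww: "(norm w)\<^sup>2 = (norm v)\<^sup>2 / (l - \<mu>)^2" using lm by (simp add: w_def power_divide)
  have vv: "inner v w = inner g' w - inner g w + \<mu> * inner e w" by (simp add: v_def inner_diff_left inner_add_left)
  have lo2: "f z \<ge> f y + inner g' e + inner g' w + \<mu>/2*(norm e)\<^sup>2 + \<mu>*(inner e w) + \<mu>/2*(norm w)\<^sup>2"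
    using lo unfolding n1 inner_add_right by (simp add: ring_distribs)
  have e3: "(l - \<mu>)/2 * (norm w)\<^sup>2 = l/2*(norm w)\<^sup>2 - \<mu>/2*(norm w)\<^sup>2" by (simp add: left_diff_distrib diff_divide_distrib)
  have key: "f x \<ge> f y + inner g' e + \<mu>/2*(norm e)\<^sup>2 + (inner v w - (l - \<mu>)/2 * (norm w)\<^sup>2)"
    unfolding e3 using up lo2 vv by linarith
  have "inner v w - (l - \<mu>)/2 * (norm w)\<^sup>2 = (norm v)\<^sup>2 / (2*(l - \<mu>))"
  proof -
    have gen: "\<And>N D::real. D > 0 \<Longrightarrow> N / D - D/2 * (N / D^2) = N / (2*D)"
      by (simp add: field_simps power2_eq_square)
    show ?thesis unfolding vw ww using gen[OF lm] by simp
  qed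
  note eq = this
  have nv: "norm (g - g' - \<mu> *\<^sub>R (x - y)) = norm v"
  proof -
    have "g - g' - \<mu> *\<^sub>R (x - y) = - v" by (simp add: v_def e_def algebra_simps)
    then show ?thesis by simp
  qed
  have rr: "rr \<mu> L = 1/(2*(l-\<mu>))" using False by (simp add: rr_def l_def)
  have "f x \<ge> f y + inner g' e + \<mu>/2*(norm e)\<^sup>2 + 1/(2*(l-\<mu>)) * (norm v)\<^sup>2"
    using key unfolding eq by simp
  then show ?thesis unfolding nv rr e_def .
qed

lemma qA:
  fixes ma mb l dd ud U :: real
  assumes l: "l > ma" "l > 0" and c: "ma*l + mb*l + ma*mb \<ge> 0"
    and sos: "0 \<le> U - 2*(l-ma)*ud + (l-ma)^2*dd"
  shows "(ma+mb)/2*dd - (mb/l)*ud + (1+2*(mb/l))*(1/(2*(l-ma)))*U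
         - ((l+mb)/l^2)/2*(U + 2*ma*ud + ma^2*dd) \<ge> 0"
proof -
  define Q where "Q = (ma*l + mb*l + ma*mb)/(l^2*(l-ma))"
  have Q0: "Q \<ge> 0" using l c by (simp add: Q_def)
  have eq: "(ma+mb)/2*dd - (mb/l)*ud + (1+2*(mb/l))*(1/(2*(l-ma)))*U
         - ((l+mb)/l^2)/2*(U + 2*ma*ud + ma^2*dd) = Q/2 * (U - 2*(l-ma)*ud + (l-ma)^2*dd)"
    using l unfolding Q_def by (simp add: field_simps power2_eq_square)
  show ?thesis unfolding eq using Q0 sos by simp
qed

lemma qB:
  fixes ma mb l dd ud U :: real
  assumes l: "l > ma" and m: "ma > 0" "mb < 0" "ma + mb > 0"
    and sos: "0 \<le> U - 2*((ma+mb)*(l-ma)/ma)*ud + ((ma+mb)*(l-ma)/ma)^2*dd"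
  shows "(ma+mb)/2*dd + (1/(2*(l-ma)))*U
         - ((ma+mb)/(l*(ma+mb) - ma*mb))/2*(U + 2*ma*ud + ma^2*dd) \<ge> 0"
proof -
  have D: "l*(ma+mb) - ma*mb > 0"
  proof -
    have "l*(ma+mb) > 0" using l m by (intro mult_pos_pos) auto
    moreover have "ma*mb < 0" using m by (simp add: mult_pos_neg)
    ultimately show ?thesis by linarith
  qed
  define Q where "Q = ma^2/((l-ma)*(l*(ma+mb) - ma*mb))"
  have Q0: "Q \<ge> 0" using l D by (simp add: Q_def)
  have eq: "(ma+mb)/2*dd + (1/(2*(l-ma)))*U
         - ((ma+mb)/(l*(ma+mb) - ma*mb))/2*(U + 2*ma*ud + ma^2*dd)
         = Q/2 * (U - 2*((ma+mb)*(l-ma)/ma)*ud + ((ma+mb)*(l-ma)/ma)^2*dd)"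
  proof -
    define D where "D = l*(ma+mb) - ma*mb"
    have D0: "D \<noteq> 0" using D by (simp add: D_def)
    have l0: "l - ma \<noteq> 0" using l by simp
    have m0: "ma \<noteq> 0" using m by simp
    have eD: "(ma+mb)/D = (ma+mb)/D" ..
    have key: "D = l*(ma+mb) - ma*mb" by (simp add: D_def)
    show ?thesis unfolding Q_def D_def[symmetric] using D0 l0 m0
      apply (simp add: field_simps power2_eq_square)
      apply (simp add: key algebra_simps)
      done
  qed
  show ?thesis unfolding eq using Q0 sos by simp
qed

lemma qC:
  fixes ma mb l dd ud U :: real
  assumes l: "l > ma" "l > 0" and m: "ma < 0" "ma + mb > 0" and c: "ma*mb + (ma+mb)*l < 0"
    and U: "U \<ge> 0"
  shows "(ma+mb)/2*dd - (-(ma+mb)/ma)*ud + (1+2*(-(ma+mb)/ma))*(1/(2*(l-ma)))*U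
         - ((ma+mb)/ma^2)/2*(U + 2*ma*ud + ma^2*dd) \<ge> 0"
proof -
  define Q where "Q = (-(ma*mb) - (ma+mb)*l)/(ma^2*(l-ma))"
  have Q0: "Q \<ge> 0" using l c m by (simp add: Q_def)
  have eq: "(ma+mb)/2*dd - (-(ma+mb)/ma)*ud + (1+2*(-(ma+mb)/ma))*(1/(2*(l-ma)))*U
         - ((ma+mb)/ma^2)/2*(U + 2*ma*ud + ma^2*dd) = Q/2 * U"
    using l m unfolding Q_def by (simp add: field_simps power2_eq_square)
  show ?thesis unfolding eq using Q0 U by simp
qed

lemma comb:
  fixes P1 P1' Q Q' bd ad cd u1d u2d dd U1 U2 r1 r2 m1 m2 ss t :: real
  assumes ad: "ad = bd - u1d - m1*dd" and cd: "cd = bd + u2d + m2*dd"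
   and I1: "P1' \<ge> P1 + ad + m1/2*dd + r1*U1"
   and I1': "P1 \<ge> P1' - bd + m1/2*dd + r1*U1"
   and I2: "Q' \<ge> Q + bd + m2/2*dd + r2*U2"
   and I2': "Q \<ge> Q' - cd + m2/2*dd + r2*U2"
   and s: "ss \<ge> 0" and t: "t \<ge> 0"
  shows "(P1 - Q) - (P1' - Q') \<ge> (m1+m2)/2*dd - ss *u1d - t*u2d + (1+2* ss)*r1*U1 + (1+2*t)*r2*U2"
proof -
  have h1: "0 \<le> ss * ((P1' - P1 - ad - m1/2*dd - r1*U1) + (P1 - P1' + bd - m1/2*dd - r1*U1))"
    using I1 I1' by (intro mult_nonneg_nonneg[OF s]) linarith
  have h2: "0 \<le> t * ((Q' - Q - bd - m2/2*dd - r2*U2) + (Q - Q' + cd - m2/2*dd - r2*U2))"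
    using I2 I2' by (intro mult_nonneg_nonneg[OF t]) linarith
  have e1: "ss * ((P1' - P1 - ad - m1/2*dd - r1*U1) + (P1 - P1' + bd - m1/2*dd - r1*U1)) = ss *u1d - 2* ss*r1*U1"
    unfolding ad by (simp add: algebra_simps)
  have e2: "t * ((Q' - Q - bd - m2/2*dd - r2*U2) + (Q - Q' + cd - m2/2*dd - r2*U2)) = t*u2d - 2*t*r2*U2"
    unfolding cd by (simp add: algebra_simps)
  have e3: "(1+2* ss)*r1*U1 = r1*U1 + 2* ss*r1*U1" "(1+2*t)*r2*U2 = r2*U2 + 2*t*r2*U2" by (simp_all add: algebra_simps)
  have e4: "(m1+m2)/2*dd = m1/2*dd + m2/2*dd" by (simp add: algebra_simps)
  show ?thesis unfolding e3 e4 using h1 h2 e1 e2 I1' I2 by linarith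
qed

lemma step_generic:
  fixes f1 f2 :: "'a::euclidean_space \<Rightarrow> real"
  assumes fc1: "fclass \<mu>1 L1 f1" and fc2: "fclass \<mu>2 L2 f2"
    and m1: "ereal \<mu>1 < L1" and m2: "ereal \<mu>2 < L2"
    and a: "a \<in> subdiff \<mu>1 f1 x" and b1: "b \<in> subdiff \<mu>1 f1 x'"
    and b2: "b \<in> subdiff \<mu>2 f2 x" and c: "c \<in> subdiff \<mu>2 f2 x'"
    and s: "ss \<ge> 0" and t: "t \<ge> 0"
  shows "(f1 x - f2 x) - (f1 x' - f2 x') \<ge> (\<mu>1+\<mu>2)/2*(norm (x'-x))\<^sup>2
     - ss *inner (b - a - \<mu>1 *\<^sub>R (x'-x)) (x'-x) - t*inner (c - b - \<mu>2 *\<^sub>R (x'-x)) (x'-x)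
     + (1+2* ss)*rr \<mu>1 L1*(norm (b - a - \<mu>1 *\<^sub>R (x'-x)))\<^sup>2
     + (1+2*t)*rr \<mu>2 L2*(norm (c - b - \<mu>2 *\<^sub>R (x'-x)))\<^sup>2"
proof -
  define d where "d = x' - x"
  define u1 where "u1 = b - a - \<mu>1 *\<^sub>R d"
  define u2 where "u2 = c - b - \<mu>2 *\<^sub>R d"
  have nd: "norm (x - x') = norm d" by (simp add: d_def norm_minus_commute)
  have nu1: "norm (a - b - \<mu>1 *\<^sub>R (x - x')) = norm u1"
  proof -
    have "a - b - \<mu>1 *\<^sub>R (x - x') = - u1" by (simp add: u1_def d_def algebra_simps)
    then show ?thesis by simp
  qed
  have nu2: "norm (b - c - \<mu>2 *\<^sub>R (x - x')) = norm u2"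
  proof -
    have "b - c - \<mu>2 *\<^sub>R (x - x') = - u2" by (simp add: u2_def d_def algebra_simps)
    then show ?thesis by simp
  qed
  have I1: "f1 x' \<ge> f1 x + inner a d + \<mu>1/2*(norm d)\<^sup>2 + rr \<mu>1 L1*(norm u1)\<^sup>2"
    using interp[OF fc1 m1 b1 a] by (simp add: d_def u1_def)
  have I1': "f1 x \<ge> f1 x' - inner b d + \<mu>1/2*(norm d)\<^sup>2 + rr \<mu>1 L1*(norm u1)\<^sup>2"
  proof -
    have "inner b (x - x') = - inner b d" by (simp add: d_def inner_diff_right)
    then show ?thesis using interp[OF fc1 m1 a b1] unfolding nd nu1 by simp
  qed
  have I2: "f2 x' \<ge> f2 x + inner b d + \<mu>2/2*(norm d)\<^sup>2 + rr \<mu>2 L2*(norm u2)\<^sup>2"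
    using interp[OF fc2 m2 c b2] by (simp add: d_def u2_def)
  have I2': "f2 x \<ge> f2 x' - inner c d + \<mu>2/2*(norm d)\<^sup>2 + rr \<mu>2 L2*(norm u2)\<^sup>2"
  proof -
    have "inner c (x - x') = - inner c d" by (simp add: d_def inner_diff_right)
    then show ?thesis using interp[OF fc2 m2 b2 c] unfolding nd nu2 by simp
  qed
  have ad: "inner a d = inner b d - inner u1 d - \<mu>1 * (norm d)\<^sup>2"
    by (simp add: u1_def inner_diff_left power2_norm_eq_inner)
  have cd: "inner c d = inner b d + inner u2 d + \<mu>2 * (norm d)\<^sup>2"
    by (simp add: u2_def inner_diff_left power2_norm_eq_inner)
  show ?thesis
    using comb[OF ad cd I1 I1' I2 I2' s t] unfolding d_def[symmetric] u1_def[symmetric] u2_def[symmetric] .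
qed


lemma nsq_plus: fixes u d :: "'a::real_inner"
  shows "(norm (u + k *\<^sub>R d))\<^sup>2 = (norm u)\<^sup>2 + 2*k*inner u d + k^2*(norm d)\<^sup>2"
  unfolding power2_norm_eq_inner by (simp add: inner_add_left inner_add_right inner_commute power2_eq_square algebra_simps)

lemma nsq_minus: fixes u d :: "'a::real_inner"
  shows "(norm (u - k *\<^sub>R d))\<^sup>2 = (norm u)\<^sup>2 - 2*k*inner u d + k^2*(norm d)\<^sup>2"
  unfolding power2_norm_eq_inner by (simp add: inner_diff_left inner_diff_right inner_commute power2_eq_square algebra_simps)

lemma vA: fixes u d :: "'a::real_inner"
  assumes "l > ma" "l > 0" "ma*l + mb*l + ma*mb \<ge> 0"
  shows "(ma+mb)/2*(norm d)\<^sup>2 - (mb/l)*inner u d + (1+2*(mb/l))*(1/(2*(l-ma)))*(norm u)\<^sup>2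
         - ((l+mb)/l^2)/2*(norm (u + ma *\<^sub>R d))\<^sup>2 \<ge> 0"
proof -
  have "0 \<le> (norm (u - (l-ma) *\<^sub>R d))\<^sup>2" by simp
  then have sos: "0 \<le> (norm u)\<^sup>2 - 2*(l-ma)*inner u d + (l-ma)^2*(norm d)\<^sup>2" by (simp only: nsq_minus)
  show ?thesis unfolding nsq_plus using qA[OF assms sos] .
qed

lemma vB: fixes u d :: "'a::real_inner"
  assumes "l > ma" "ma > 0" "mb < 0" "ma + mb > 0"
  shows "(ma+mb)/2*(norm d)\<^sup>2 + (1/(2*(l-ma)))*(norm u)\<^sup>2
         - ((ma+mb)/(l*(ma+mb) - ma*mb))/2*(norm (u + ma *\<^sub>R d))\<^sup>2 \<ge> 0"
proof -
  have "0 \<le> (norm (u - ((ma+mb)*(l-ma)/ma) *\<^sub>R d))\<^sup>2" by simp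
  then have sos: "0 \<le> (norm u)\<^sup>2 - 2*((ma+mb)*(l-ma)/ma)*inner u d + ((ma+mb)*(l-ma)/ma)^2*(norm d)\<^sup>2"
    by (simp only: nsq_minus)
  show ?thesis unfolding nsq_plus using qB[OF assms sos] .
qed

lemma vC: fixes u d :: "'a::real_inner"
  assumes "l > ma" "l > 0" "ma < 0" "ma + mb > 0" "ma*mb + (ma+mb)*l < 0"
  shows "(ma+mb)/2*(norm d)\<^sup>2 - (-(ma+mb)/ma)*inner u d + (1+2*(-(ma+mb)/ma))*(1/(2*(l-ma)))*(norm u)\<^sup>2
         - ((ma+mb)/ma^2)/2*(norm (u + ma *\<^sub>R d))\<^sup>2 \<ge> 0"
  unfolding nsq_plus using qC[OF assms] by simp

lemma argmin_sub:
  fixes f :: "'a::real_inner \<Rightarrow> real"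
  assumes "dca_argmin f g y"
  shows "g \<in> subdiff \<mu> f y"
proof (cases "\<mu> \<ge> 0")
  case True
  then show ?thesis using assms by (auto simp: subdiff_def csubdiff_def dca_argmin_def inner_diff_right algebra_simps)
next
  case False
  have "g - \<mu> *\<^sub>R y \<in> csubdiff (\<lambda>y. f y - \<mu> / 2 * (norm y)\<^sup>2) y"
    unfolding csubdiff_def
  proof (clarify)
    fix w
    have a: "f y - inner g y \<le> f w - inner g w" using assms by (simp add: dca_argmin_def)
    have "(norm w)\<^sup>2 = (norm y)\<^sup>2 + 2 * inner y (w - y) + (norm (w - y))\<^sup>2" by (rule sq_id)
    moreover have "- \<mu> / 2 * (norm (w - y))\<^sup>2 \<ge> 0" using False by (intro mult_nonneg_nonneg) auto
    moreover have "inner (g - \<mu> *\<^sub>R y) (w - y) = inner g w - inner g y - \<mu> * inner y (w - y)"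
      by (simp only: inner_diff_left inner_scaleR_left inner_diff_right[of g])
    ultimately show "f y - \<mu> / 2 * (norm y)\<^sup>2 + inner (g - \<mu> *\<^sub>R y) (w - y) \<le> f w - \<mu> / 2 * (norm w)\<^sup>2"
      using a by (simp add: ring_distribs) 
  qed
  moreover have "g = (g - \<mu> *\<^sub>R y) + \<mu> *\<^sub>R y" by simp
  ultimately show ?thesis using False unfolding subdiff_def by (simp only: if_False) blast
qed


lemma fin_L:
  assumes "L \<noteq> PInfty" "L > 0" "ereal \<mu> < L"
  shows "real_of_ereal L > 0" "\<mu> < real_of_ereal L" "rr \<mu> L = 1/(2*(real_of_ereal L - \<mu>))"
  using assms by (cases L; simp add: rr_def)+

lemma inv_cond:
  fixes a b l :: real
  assumes "a*b*l < 0"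
  shows "1/a + 1/b + 1/l \<le> 0 \<Longrightarrow> a*l + b*l + a*b \<ge> 0"
    and "0 < 1/a + 1/b + 1/l \<Longrightarrow> a*b + (a+b)*l < 0"
proof -
  have nz: "a \<noteq> 0" "b \<noteq> 0" "l \<noteq> 0" using assms by auto
  have e: "a*b*l*(1/a + 1/b + 1/l) = a*l + b*l + a*b" using nz by (simp add: field_simps)
  show "1/a + 1/b + 1/l \<le> 0 \<Longrightarrow> a*l + b*l + a*b \<ge> 0"
    using mult_nonpos_nonpos[of "a*b*l" "1/a + 1/b + 1/l"] assms e by linarith
  show "0 < 1/a + 1/b + 1/l \<Longrightarrow> a*b + (a+b)*l < 0"
    using mult_neg_pos[of "a*b*l" "1/a + 1/b + 1/l"] assms e by (simp add: algebra_simps)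
qed

lemma sigma_eq:
  fixes a b l :: real
  assumes "a > 0" "b < 0" "a + b > 0" "l > 0"
  shows "((1/l) * (1/a + 1/b)) / (1/a + 1/b - 1/l) = (a+b)/(l*(a+b) - a*b)"
proof -
  have D: "l*(a+b) - a*b > 0"
  proof -
    have "l*(a+b) > 0" using assms by simp
    moreover have "a*b < 0" using assms by (simp add: mult_pos_neg)
    ultimately show ?thesis by linarith
  qed
  have nz: "a \<noteq> 0" "b \<noteq> 0" "l \<noteq> 0" using assms by auto
  have e1: "1/a + 1/b - 1/l = (l*(a+b) - a*b)/(a*b*l)" using nz by (simp add: field_simps)
  have e2: "(1/l) * (1/a + 1/b) = (a+b)/(a*b*l)" using nz by (simp add: field_simps)
  have g: "\<And>x y c::real. c \<noteq> 0 \<Longrightarrow> (x/c)/(y/c) = x/y" by (simp add: divide_divide_times_eq)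
  show ?thesis unfolding e1 e2 using nz by (intro g) simp
qed


lemma onestep:
  fixes \<mu>1 \<mu>2 :: real and L1 L2 :: ereal and f1 f2 :: "'a::euclidean_space \<Rightarrow> real"
  assumes mu: "\<mu>1 + \<mu>2 > 0 \<or> (\<mu>1 = 0 \<and> \<mu>2 = 0)"
    and Lpos: "L1 > 0" "L2 > 0"
    and Linf: "(L1 = PInfty \<and> L2 \<noteq> PInfty) \<or> (L2 = PInfty \<and> L1 \<noteq> PInfty)"
    and muL: "ereal \<mu>1 < L1" "ereal \<mu>2 < L2"
    and f1: "fclass \<mu>1 L1 f1" and f2: "fclass \<mu>2 L2 f2"
    and regime: "dca_regime \<mu>1 \<mu>2 L1 L2 \<sigma> \<sigma>p"
    and h1: "h1 \<in> subdiff \<mu>1 f1 y" and h2: "h2 \<in> subdiff \<mu>2 f2 y"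
    and am: "dca_argmin f1 h2 y'" and h2': "h2' \<in> subdiff \<mu>2 f2 y'"
  shows "(f1 y - f2 y) - (f1 y' - f2 y') \<ge> \<sigma> / 2 * (norm (h1 - h2))\<^sup>2 + \<sigma>p / 2 * (norm (h2 - h2'))\<^sup>2"
proof -
  have h2f1: "h2 \<in> subdiff \<mu>1 f1 y'" by (rule argmin_sub[OF am])
  define d where "d = y' - y"
  define u1 where "u1 = h2 - h1 - \<mu>1 *\<^sub>R d"
  define u2 where "u2 = h2' - h2 - \<mu>2 *\<^sub>R d"
  define l1 where "l1 = real_of_ereal L1"
  define l2 where "l2 = real_of_ereal L2"
  define LHS where "LHS = (f1 y - f2 y) - (f1 y' - f2 y')"
  have G: "\<And>ss t. ss \<ge> 0 \<Longrightarrow> t \<ge> 0 \<Longrightarrow> LHS \<ge> (\<mu>1+\<mu>2)/2*(norm d)\<^sup>2 - ss * inner u1 d - t * inner u2 d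
      + (1+2* ss)*rr \<mu>1 L1*(norm u1)\<^sup>2 + (1+2*t)*rr \<mu>2 L2*(norm u2)\<^sup>2"
    using step_generic[OF f1 f2 muL h1 h2f1 h2 h2'] unfolding d_def u1_def u2_def LHS_def by blast
  have n1: "norm (h1 - h2) = norm (u1 + \<mu>1 *\<^sub>R d)"
    by (simp add: u1_def norm_minus_commute)
  have n2: "norm (h2 - h2') = norm (u2 + \<mu>2 *\<^sub>R d)"
    by (simp add: u2_def norm_minus_commute)
  have cm: "\<mu>2 + \<mu>1 = \<mu>1 + \<mu>2" by simp
  have R: "(L1 = PInfty \<and> L2 \<noteq> PInfty \<and> l2 > \<mu>1 \<and> \<mu>1 \<ge> 0 \<and>
       (\<mu>2 \<ge> 0 \<or> (\<mu>2 < 0 \<and> 1/\<mu>1 + 1/\<mu>2 + 1/l2 \<le> 0)) \<and>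
       \<sigma> = 0 \<and> \<sigma>p = (l2 + \<mu>1) / l2\<^sup>2)
   \<or> (L2 = PInfty \<and> L1 \<noteq> PInfty \<and> l1 > \<mu>2 \<and> \<mu>2 \<ge> 0 \<and>
       (\<mu>1 \<ge> 0 \<or> (\<mu>1 < 0 \<and> 1/\<mu>1 + 1/\<mu>2 + 1/l1 \<le> 0)) \<and>
       \<sigma> = (l1 + \<mu>2) / l1\<^sup>2 \<and> \<sigma>p = 0)
   \<or> (L2 = PInfty \<and> \<mu>1 > - \<mu>2 \<and> - \<mu>2 > 0 \<and>
       \<sigma> = ((1/l1) * (1/\<mu>1 + 1/\<mu>2)) / (1/\<mu>1 + 1/\<mu>2 - 1/l1) \<and> \<sigma>p = 0)
   \<or> (L1 = PInfty \<and> \<mu>2 > - \<mu>1 \<and> - \<mu>1 > 0 \<and>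
       \<sigma> = 0 \<and> \<sigma>p = ((1/l2) * (1/\<mu>1 + 1/\<mu>2)) / (1/\<mu>1 + 1/\<mu>2 - 1/l2))
   \<or> (L1 = PInfty \<and> \<mu>1 > - \<mu>2 \<and> - \<mu>2 > 0 \<and> 0 < 1/\<mu>1 + 1/\<mu>2 + 1/l2 \<and>
       \<sigma> = 0 \<and> \<sigma>p = (\<mu>1 + \<mu>2) / \<mu>2\<^sup>2)
   \<or> (L2 = PInfty \<and> \<mu>2 > - \<mu>1 \<and> - \<mu>1 > 0 \<and> 0 < 1/\<mu>1 + 1/\<mu>2 + 1/l1 \<and>
       \<sigma> = (\<mu>1 + \<mu>2) / \<mu>1\<^sup>2 \<and> \<sigma>p = 0)"
    using regime unfolding dca_regime_def Let_def l1_def l2_def .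
  have rrinf: "\<And>\<mu> L. L = PInfty \<Longrightarrow> rr \<mu> L = 0" by (simp add: rr_def)
  have side2: "\<And>t. t \<ge> 0 \<Longrightarrow> L1 = PInfty \<Longrightarrow> L2 \<noteq> PInfty \<Longrightarrow>
      LHS \<ge> (\<mu>1+\<mu>2)/2*(norm d)\<^sup>2 - t * inner u2 d + (1+2*t)*(1/(2*(l2-\<mu>2)))*(norm u2)\<^sup>2"
  proof -
    fix t :: real assume t: "t \<ge> 0" and a: "L1 = PInfty" "L2 \<noteq> PInfty"
    have "rr \<mu>2 L2 = 1/(2*(l2-\<mu>2))" using fin_L[OF a(2) Lpos(2) muL(2)] by (simp add: l2_def)
    then show "LHS \<ge> (\<mu>1+\<mu>2)/2*(norm d)\<^sup>2 - t * inner u2 d + (1+2*t)*(1/(2*(l2-\<mu>2)))*(norm u2)\<^sup>2"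
      using G[OF order_refl t] rrinf[OF a(1)] by simp
  qed
  have side1: "\<And>t. t \<ge> 0 \<Longrightarrow> L2 = PInfty \<Longrightarrow> L1 \<noteq> PInfty \<Longrightarrow>
      LHS \<ge> (\<mu>1+\<mu>2)/2*(norm d)\<^sup>2 - t * inner u1 d + (1+2*t)*(1/(2*(l1-\<mu>1)))*(norm u1)\<^sup>2"
  proof -
    fix t :: real assume t: "t \<ge> 0" and a: "L2 = PInfty" "L1 \<noteq> PInfty"
    have "rr \<mu>1 L1 = 1/(2*(l1-\<mu>1))" using fin_L[OF a(2) Lpos(1) muL(1)] by (simp add: l1_def)
    then show "LHS \<ge> (\<mu>1+\<mu>2)/2*(norm d)\<^sup>2 - t * inner u1 d + (1+2*t)*(1/(2*(l1-\<mu>1)))*(norm u1)\<^sup>2"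
      using G[OF t order_refl] rrinf[OF a(1)] by simp
  qed
  have fin1: "L1 \<noteq> PInfty \<Longrightarrow> l1 > 0 \<and> \<mu>1 < l1" using fin_L[OF _ Lpos(1) muL(1)] by (simp add: l1_def)
  have fin2: "L2 \<noteq> PInfty \<Longrightarrow> l2 > 0 \<and> \<mu>2 < l2" using fin_L[OF _ Lpos(2) muL(2)] by (simp add: l2_def)
  have c0: "\<sigma> / 2 * (norm (u1 + \<mu>1 *\<^sub>R d))\<^sup>2 + \<sigma>p / 2 * (norm (u2 + \<mu>2 *\<^sub>R d))\<^sup>2 \<le> LHS"
    if a: "L1 = PInfty" "L2 \<noteq> PInfty" "\<mu>1 < l2" "0 \<le> \<mu>1" and c: "0 \<le> \<mu>2 \<or> \<mu>2 < 0 \<and> 1 / \<mu>1 + 1 / \<mu>2 + 1 / l2 \<le> 0" and s: "\<sigma> = 0" "\<sigma>p = (l2 + \<mu>1) / l2\<^sup>2"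
  proof -
    have l: "l2 > 0" "\<mu>2 < l2" using fin2 a by auto
    have cond: "\<mu>2*l2 + \<mu>1*l2 + \<mu>2*\<mu>1 \<ge> 0"
      using c
    proof
      assume "0 \<le> \<mu>2" then show ?thesis using a l by simp
    next
      assume b: "\<mu>2 < 0 \<and> 1 / \<mu>1 + 1 / \<mu>2 + 1 / l2 \<le> 0"
      then have "\<mu>1 > 0" using mu by auto
      then have "\<mu>1*\<mu>2*l2 < 0" using b l by (simp add: mult_pos_neg mult_neg_pos)
      from inv_cond(1)[OF this] b show ?thesis by (simp add: algebra_simps)
    qed
    have v: "(\<mu>2+\<mu>1)/2*(norm d)\<^sup>2 - (\<mu>1/l2)*inner u2 d + (1+2*(\<mu>1/l2))*(1/(2*(l2-\<mu>2)))*(norm u2)\<^sup>2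
         - ((l2+\<mu>1)/l2^2)/2*(norm (u2 + \<mu>2 *\<^sub>R d))\<^sup>2 \<ge> 0"
      by (rule vA[OF l(2) l(1) cond])
    have t: "\<mu>1/l2 \<ge> 0" using a l by simp
    show ?thesis
      using side2[OF t a(1,2)] v unfolding s cm by simp
  qed
  have c1: "\<sigma> / 2 * (norm (u1 + \<mu>1 *\<^sub>R d))\<^sup>2 + \<sigma>p / 2 * (norm (u2 + \<mu>2 *\<^sub>R d))\<^sup>2 \<le> LHS"
    if a: "L2 = PInfty" "L1 \<noteq> PInfty" "\<mu>2 < l1" "0 \<le> \<mu>2" and c: "0 \<le> \<mu>1 \<or> \<mu>1 < 0 \<and> 1 / \<mu>1 + 1 / \<mu>2 + 1 / l1 \<le> 0" and s: "\<sigma> = (l1 + \<mu>2) / l1\<^sup>2" "\<sigma>p = 0"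
  proof -
    have l: "l1 > 0" "\<mu>1 < l1" using fin1 a by auto
    have cond: "\<mu>1*l1 + \<mu>2*l1 + \<mu>1*\<mu>2 \<ge> 0"
      using c
    proof
      assume "0 \<le> \<mu>1" then show ?thesis using a l by simp
    next
      assume b: "\<mu>1 < 0 \<and> 1 / \<mu>1 + 1 / \<mu>2 + 1 / l1 \<le> 0"
      then have "\<mu>2 > 0" using mu by auto
      then have "\<mu>1*\<mu>2*l1 < 0" using b l by (simp add: mult_pos_neg mult_neg_pos)
      from inv_cond(1)[OF this] b show ?thesis by (simp add: algebra_simps)
    qed
    have v: "(\<mu>1+\<mu>2)/2*(norm d)\<^sup>2 - (\<mu>2/l1)*inner u1 d + (1+2*(\<mu>2/l1))*(1/(2*(l1-\<mu>1)))*(norm u1)\<^sup>2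
         - ((l1+\<mu>2)/l1^2)/2*(norm (u1 + \<mu>1 *\<^sub>R d))\<^sup>2 \<ge> 0"
      by (rule vA[OF l(2) l(1) cond])
    have t: "\<mu>2/l1 \<ge> 0" using a l by simp
    show ?thesis
      using side1[OF t a(1,2)] v unfolding s by simp
  qed
  have c2: "\<sigma> / 2 * (norm (u1 + \<mu>1 *\<^sub>R d))\<^sup>2 + \<sigma>p / 2 * (norm (u2 + \<mu>2 *\<^sub>R d))\<^sup>2 \<le> LHS"
    if a: "L2 = PInfty" "- \<mu>2 < \<mu>1" "0 < - \<mu>2" and s: "\<sigma> = 1 / l1 * (1 / \<mu>1 + 1 / \<mu>2) / (1 / \<mu>1 + 1 / \<mu>2 - 1 / l1)" "\<sigma>p = 0"
  proof -
    have a2: "L1 \<noteq> PInfty" using Linf a by auto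
    have l: "l1 > 0" "\<mu>1 < l1" using fin1 a2 by auto
    have m: "\<mu>1 > 0" "\<mu>2 < 0" "\<mu>1 + \<mu>2 > 0" using a by auto
    have se: "\<sigma> = (\<mu>1+\<mu>2)/(l1*(\<mu>1+\<mu>2) - \<mu>1*\<mu>2)" using s(1) sigma_eq[OF m l(1)] by simp
    have v: "(\<mu>1+\<mu>2)/2*(norm d)\<^sup>2 + (1/(2*(l1-\<mu>1)))*(norm u1)\<^sup>2
         - ((\<mu>1+\<mu>2)/(l1*(\<mu>1+\<mu>2) - \<mu>1*\<mu>2))/2*(norm (u1 + \<mu>1 *\<^sub>R d))\<^sup>2 \<ge> 0"
      by (rule vB[OF l(2) m])
    show ?thesis
      using side1[OF order_refl a(1) a2] v unfolding se s(2) by simp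
  qed
  have c3: "\<sigma> / 2 * (norm (u1 + \<mu>1 *\<^sub>R d))\<^sup>2 + \<sigma>p / 2 * (norm (u2 + \<mu>2 *\<^sub>R d))\<^sup>2 \<le> LHS"
    if a: "L1 = PInfty" "- \<mu>1 < \<mu>2" "0 < - \<mu>1" and s: "\<sigma> = 0" "\<sigma>p = 1 / l2 * (1 / \<mu>1 + 1 / \<mu>2) / (1 / \<mu>1 + 1 / \<mu>2 - 1 / l2)"
  proof -
    have a2: "L2 \<noteq> PInfty" using Linf a by auto
    have l: "l2 > 0" "\<mu>2 < l2" using fin2 a2 by auto
    have m: "\<mu>2 > 0" "\<mu>1 < 0" "\<mu>2 + \<mu>1 > 0" using a by auto
    have se: "\<sigma>p = (\<mu>2+\<mu>1)/(l2*(\<mu>2+\<mu>1) - \<mu>2*\<mu>1)" using s(2) sigma_eq[OF m l(1)]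
      by (simp add: add.commute)
    have v: "(\<mu>2+\<mu>1)/2*(norm d)\<^sup>2 + (1/(2*(l2-\<mu>2)))*(norm u2)\<^sup>2
         - ((\<mu>2+\<mu>1)/(l2*(\<mu>2+\<mu>1) - \<mu>2*\<mu>1))/2*(norm (u2 + \<mu>2 *\<^sub>R d))\<^sup>2 \<ge> 0"
      by (rule vB[OF l(2) m])
    show ?thesis
      using side2[OF order_refl a(1) a2] v unfolding se s(1) cm by simp
  qed
  have c4: "\<sigma> / 2 * (norm (u1 + \<mu>1 *\<^sub>R d))\<^sup>2 + \<sigma>p / 2 * (norm (u2 + \<mu>2 *\<^sub>R d))\<^sup>2 \<le> LHS"
    if a: "L1 = PInfty" "- \<mu>2 < \<mu>1" "0 < - \<mu>2" "0 < 1 / \<mu>1 + 1 / \<mu>2 + 1 / l2" and s: "\<sigma> = 0" "\<sigma>p = (\<mu>1 + \<mu>2) / \<mu>2\<^sup>2"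
  proof -
    have a2: "L2 \<noteq> PInfty" using Linf a by auto
    have l: "l2 > 0" "\<mu>2 < l2" using fin2 a2 by auto
    have m: "\<mu>2 < 0" "\<mu>2 + \<mu>1 > 0" using a by auto
    have "\<mu>1*\<mu>2*l2 < 0" using a l by (simp add: mult_pos_neg mult_neg_pos)
    from inv_cond(2)[OF this a(4)] have cond: "\<mu>2*\<mu>1 + (\<mu>2+\<mu>1)*l2 < 0" by (simp add: algebra_simps)
    have v: "(\<mu>2+\<mu>1)/2*(norm d)\<^sup>2 - (-(\<mu>2+\<mu>1)/\<mu>2)*inner u2 d + (1+2*(-(\<mu>2+\<mu>1)/\<mu>2))*(1/(2*(l2-\<mu>2)))*(norm u2)\<^sup>2
         - ((\<mu>2+\<mu>1)/\<mu>2^2)/2*(norm (u2 + \<mu>2 *\<^sub>R d))\<^sup>2 \<ge> 0"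
      by (rule vC[OF l(2) l(1) m cond])
    have t: "-(\<mu>1+\<mu>2)/\<mu>2 \<ge> 0" using m by (simp add: divide_nonpos_neg)
    show ?thesis
      using side2[OF t a(1) a2] v unfolding s cm by simp
  qed
  have c5: "\<sigma> / 2 * (norm (u1 + \<mu>1 *\<^sub>R d))\<^sup>2 + \<sigma>p / 2 * (norm (u2 + \<mu>2 *\<^sub>R d))\<^sup>2 \<le> LHS"
    if a: "L2 = PInfty" "- \<mu>1 < \<mu>2" "0 < - \<mu>1" "0 < 1 / \<mu>1 + 1 / \<mu>2 + 1 / l1" and s: "\<sigma> = (\<mu>1 + \<mu>2) / \<mu>1\<^sup>2" "\<sigma>p = 0"
  proof -
    have a2: "L1 \<noteq> PInfty" using Linf a by auto
    have l: "l1 > 0" "\<mu>1 < l1" using fin1 a2 by auto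
    have m: "\<mu>1 < 0" "\<mu>1 + \<mu>2 > 0" using a by auto
    have "\<mu>1*\<mu>2*l1 < 0" using a l by (simp add: mult_pos_neg mult_neg_pos)
    from inv_cond(2)[OF this a(4)] have cond: "\<mu>1*\<mu>2 + (\<mu>1+\<mu>2)*l1 < 0" by (simp add: algebra_simps)
    have v: "(\<mu>1+\<mu>2)/2*(norm d)\<^sup>2 - (-(\<mu>1+\<mu>2)/\<mu>1)*inner u1 d + (1+2*(-(\<mu>1+\<mu>2)/\<mu>1))*(1/(2*(l1-\<mu>1)))*(norm u1)\<^sup>2
         - ((\<mu>1+\<mu>2)/\<mu>1^2)/2*(norm (u1 + \<mu>1 *\<^sub>R d))\<^sup>2 \<ge> 0"
      by (rule vC[OF l(2) l(1) m cond])
    have t: "-(\<mu>1+\<mu>2)/\<mu>1 \<ge> 0" using m by (simp add: divide_nonpos_neg)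
    show ?thesis
      using side1[OF t a(1) a2] v unfolding s by simp
  qed
  show ?thesis unfolding LHS_def[symmetric] n1 n2 using R c0 c1 c2 c3 c4 c5 by blast
qed


lemma regime_nonneg:
  assumes "dca_regime \<mu>1 \<mu>2 L1 L2 \<sigma> \<sigma>p" "\<sigma> + \<sigma>p > 0"
  shows "\<sigma> \<ge> 0" "\<sigma>p \<ge> 0"
proof -
  have "\<sigma> = 0 \<or> \<sigma>p = 0" using assms(1) unfolding dca_regime_def Let_def by blast
  then show "\<sigma> \<ge> 0" "\<sigma>p \<ge> 0" using assms(2) by auto
qed

theorem mainTheorem5:
  fixes \<mu>1 \<mu>2 :: real and L1 L2 :: ereal
    and f1 f2 :: "'a::euclidean_space \<Rightarrow> real"
    and N :: nat and x g1 g2 :: "nat \<Rightarrow> 'a" and \<sigma> \<sigma>p :: real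
  assumes mu: "\<mu>1 + \<mu>2 > 0 \<or> (\<mu>1 = 0 \<and> \<mu>2 = 0)"
    and Lpos: "L1 > 0" "L2 > 0"
    and Linf: "(L1 = PInfty \<and> L2 \<noteq> PInfty) \<or> (L2 = PInfty \<and> L1 \<noteq> PInfty)"
    and muL: "ereal \<mu>1 < L1" "ereal \<mu>2 < L2"
    and f1: "fclass \<mu>1 L1 f1" and f2: "fclass \<mu>2 L2 f2"
    and bdd: "bdd_below (range (\<lambda>y. f1 y - f2 y))"
    and N: "N \<ge> 1"
    and g2sel: "\<forall>k<N. g2 k \<in> subdiff \<mu>2 f2 (x k)"
    and step: "\<forall>k<N. dca_argmin f1 (g2 k) (x (Suc k))"
    and g1def: "\<forall>k<N. g1 (Suc k) = g2 k"
    and g10: "g1 0 \<in> subdiff \<mu>1 f1 (x 0)"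
    and g2N: "g2 N \<in> subdiff \<mu>2 f2 (x N)"
    and regime: "dca_regime \<mu>1 \<mu>2 L1 L2 \<sigma> \<sigma>p"
    and ppos: "\<sigma> + \<sigma>p > 0"
  shows
    "(\<forall>y y' h1 h2 h2'. h1 \<in> subdiff \<mu>1 f1 y \<longrightarrow> h2 \<in> subdiff \<mu>2 f2 y \<longrightarrow>
        dca_argmin f1 h2 y' \<longrightarrow> h2' \<in> subdiff \<mu>2 f2 y' \<longrightarrow>
        (f1 y - f2 y) - (f1 y' - f2 y') \<ge>
          \<sigma> / 2 * (norm (h1 - h2))\<^sup>2 + \<sigma>p / 2 * (norm (h2 - h2'))\<^sup>2)
   \<and> (1/2) * Min ((\<lambda>k. (norm (g1 k - g2 k))\<^sup>2) ` {0..N})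
        \<le> ((f1 (x 0) - f2 (x 0)) - (f1 (x N) - f2 (x N))) / ((\<sigma> + \<sigma>p) * real N)
   \<and> (L1 > ereal \<mu>2 \<longrightarrow>
        (1/2) * Min ((\<lambda>k. (norm (g1 k - g2 k))\<^sup>2) ` {0..N})
        \<le> ((f1 (x 0) - f2 (x 0)) - (INF y. f1 y - f2 y))
           / ((\<sigma> + \<sigma>p) * real N
              + (if L1 = PInfty then 0 else 1 / (real_of_ereal L1 - \<mu>2))))"
proof -
  define F where "F = (\<lambda>y. f1 y - f2 y)"
  define m where "m = (\<lambda>k. (norm (g1 k - g2 k))\<^sup>2)"
  define M where "M = Min (m ` {0..N})"
  define p where "p = \<sigma> + \<sigma>p"
  have sg: "\<sigma> \<ge> 0" "\<sigma>p \<ge> 0" using regime_nonneg[OF regime ppos] by auto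
  have OS: "\<forall>y y' h1 h2 h2'. h1 \<in> subdiff \<mu>1 f1 y \<longrightarrow> h2 \<in> subdiff \<mu>2 f2 y \<longrightarrow>
        dca_argmin f1 h2 y' \<longrightarrow> h2' \<in> subdiff \<mu>2 f2 y' \<longrightarrow>
        (f1 y - f2 y) - (f1 y' - f2 y') \<ge>
          \<sigma> / 2 * (norm (h1 - h2))\<^sup>2 + \<sigma>p / 2 * (norm (h2 - h2'))\<^sup>2"
    using onestep[OF mu Lpos Linf muL f1 f2 regime] by blast
  have g1sub: "g1 k \<in> subdiff \<mu>1 f1 (x k)" if "k \<le> N" for k
  proof (cases k)
    case 0 then show ?thesis using g10 by simp
  next
    case (Suc j)
    then have "j < N" using that by simp
    then show ?thesis using g1def step Suc by (auto intro: argmin_sub)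
  qed
  have g2sub: "g2 k \<in> subdiff \<mu>2 f2 (x k)" if "k \<le> N" for k
    using that g2sel g2N by (cases "k = N") auto
  have stepk: "F (x k) - F (x (Suc k)) \<ge> \<sigma>/2 * m k + \<sigma>p/2 * m (Suc k)" if k: "k < N" for k
  proof -
    have "g2 k - g2 (Suc k) = g1 (Suc k) - g2 (Suc k)" using g1def k by simp
    then show ?thesis
      using OS g1sub[of k] g2sub[of k] g2sub[of "Suc k"] step k unfolding F_def m_def by auto
  qed
  have fin: "finite (m ` {0..N})" by simp
  have Mle: "M \<le> m k" if "k \<le> N" for k unfolding M_def using that by (intro Min_le fin) auto
  have stepM: "F (x k) - F (x (Suc k)) \<ge> p/2 * M" if k: "k < N" for k
  proof -
    have "\<sigma>/2 * M \<le> \<sigma>/2 * m k" using Mle[of k] k sg by (intro mult_left_mono) auto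
    moreover have "\<sigma>p/2 * M \<le> \<sigma>p/2 * m (Suc k)" using Mle[of "Suc k"] k sg by (intro mult_left_mono) auto
    ultimately show ?thesis using stepk[OF k] unfolding p_def by (simp add: distrib_right)
  qed
  have tel: "(\<Sum>k<N. F (x k) - F (x (Suc k))) = F (x 0) - F (x N)"
    by (induction N) auto
  have sumM: "real N * (p/2 * M) \<le> F (x 0) - F (x N)"
  proof -
    have "(\<Sum>k<N. p/2 * M) \<le> (\<Sum>k<N. F (x k) - F (x (Suc k)))" using stepM by (intro sum_mono) auto
    then show ?thesis unfolding tel by simp
  qed
  have p0: "p > 0" using ppos p_def by simp
  have N0: "real N > 0" using N by simp
  have part2: "(1/2) * M \<le> (F (x 0) - F (x N)) / (p * real N)"
  proof -
    have "(1/2) * M * (p * real N) \<le> F (x 0) - F (x N)" using sumM by (simp add: algebra_simps)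
    then show ?thesis using p0 N0 by (simp add: pos_le_divide_eq)
  qed
  define Finf where "Finf = (INF y. f1 y - f2 y)"
  have Finf_le: "Finf \<le> F y" for y unfolding Finf_def F_def using bdd by (intro cINF_lower) auto
  define c where "c = (if L1 = PInfty then 0 else 1 / (real_of_ereal L1 - \<mu>2))"
  have part3: "(1/2) * M \<le> (F (x 0) - Finf) / (p * real N + c)" if L: "L1 > ereal \<mu>2"
  proof -
    have c0: "c \<ge> 0"
    proof (cases "L1 = PInfty")
      case False
      then have "real_of_ereal L1 > \<mu>2" using L by (cases L1) auto
      then show ?thesis using False by (simp add: c_def)
    qed (simp add: c_def)
    have last: "F (x N) - Finf \<ge> c/2 * m N"
    proof (cases "L1 = PInfty")
      case True
      then show ?thesis using Finf_le[of "x N"] by (simp add: c_def)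
    next
      case False
      define l1 where "l1 = real_of_ereal L1"
      have lm: "l1 - \<mu>2 > 0" using L False unfolding l1_def by (cases L1) auto
      define v where "v = g1 N - g2 N"
      define w where "w = (- 1/(l1 - \<mu>2)) *\<^sub>R v"
      define ys where "ys = x N + w"
      have u: "f1 ys \<le> f1 (x N) + inner (g1 N) w + l1/2*(norm w)\<^sup>2"
        using upper_bd[OF f1 g1sub[OF order_refl] False, of ys] by (simp add: ys_def l1_def)
      have lo: "f2 ys \<ge> f2 (x N) + inner (g2 N) w + \<mu>2/2*(norm w)\<^sup>2"
        using lower_bd[OF f2 g2sub[OF order_refl], of ys] by (simp add: ys_def)
      have i1: "inner (g1 N) w - inner (g2 N) w = inner v w" by (simp add: v_def inner_diff_left)
      have i2: "inner v w = - (norm v)\<^sup>2 / (l1 - \<mu>2)" by (simp add: w_def power2_norm_eq_inner)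
      have i3: "(norm w)\<^sup>2 = (norm v)\<^sup>2 / (l1 - \<mu>2)^2" using lm by (simp add: w_def power_divide)
      have e3: "l1/2*(norm w)\<^sup>2 - \<mu>2/2*(norm w)\<^sup>2 = (l1 - \<mu>2)/2*(norm w)\<^sup>2"
        by (simp add: left_diff_distrib diff_divide_distrib)
      have "F ys \<le> F (x N) + inner v w + (l1 - \<mu>2)/2*(norm w)\<^sup>2"
        using u lo i1 e3 unfolding F_def by linarith
      moreover have "inner v w + (l1 - \<mu>2)/2*(norm w)\<^sup>2 = - (norm v)\<^sup>2 / (2*(l1 - \<mu>2))"
      proof -
        have gen: "\<And>N D::real. D > 0 \<Longrightarrow> - N / D + D/2 * (N / D^2) = - N / (2*D)"
          by (simp add: field_simps power2_eq_square)
        show ?thesis unfolding i2 i3 using gen[OF lm] by simp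
      qed
      ultimately have "F ys \<le> F (x N) - (norm v)\<^sup>2 / (2*(l1 - \<mu>2))" by linarith
      moreover have "c/2 * m N = (norm v)\<^sup>2 / (2*(l1 - \<mu>2))"
        using False by (simp add: c_def l1_def m_def v_def)
      ultimately show ?thesis using Finf_le[of ys] by linarith
    qed
    have "c/2 * M \<le> c/2 * m N" using Mle[of N] c0 by (intro mult_left_mono) auto
    then have "(1/2) * M * (p * real N + c) \<le> F (x 0) - Finf"
      using sumM last by (simp add: algebra_simps)
    moreover have "p * real N + c > 0" using p0 N0 c0 by (simp add: add_pos_nonneg)
    ultimately show ?thesis by (simp add: pos_le_divide_eq)
  qed
  show ?thesis
    using OS part2 part3 unfolding F_def m_def M_def p_def c_def Finf_def by blast
qed

end
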